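(* Let $M$ and $N$ be weight sequences with $m_k^{1/k}\to\infty$, $n_k^{1/k}\to\infty$, and such that there is $C\ge1$ with $M_{k+j}\le C^{k+j}N_jN_k$ for all $j,k\in\mathbb{N}$. Then there is $D\ge1$ such that $h_m(t)\le h_n(Dt)^2$ for all $t>0$.
   Context: A weight sequence is given by an increasing sequence $1=\mu_0\le\mu_1\le\cdots$ via $M_k=\mu_0\cdots\mu_k=k!\,m_k$, with $M_k^{1/k}\to\infty$; analogously $N\leftrightarrow n$. For a positive sequence $m$ with $m_0=1$, $h_m(t)=\inf_{k\in\mathbb{N}}m_kt^k$ for $t>0$. *)

theory Defs
  imports "HOL-Analysis.Analysis"
begin

definition quot_seq :: "(nat \<Rightarrow> real) \<Rightarrow> nat \<Rightarrow> real" where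
  "quot_seq M k = (if k = 0 then 1 else M k / M (k - 1))"

definition weight_seq :: "(nat \<Rightarrow> real) \<Rightarrow> bool" where
  "weight_seq M \<longleftrightarrow> M 0 = 1 \<and> (\<forall>k. 0 < M k) \<and> mono (quot_seq M)
     \<and> filterlim (\<lambda>k. root k (M k)) at_top sequentially"

definition small_seq :: "(nat \<Rightarrow> real) \<Rightarrow> nat \<Rightarrow> real" where
  "small_seq M k = M k / fact k"

definition h_fun :: "(nat \<Rightarrow> real) \<Rightarrow> real \<Rightarrow> real" where
  "h_fun m t = (INF k. m k * t ^ k)"

end

theory Submission
  imports Defs
begin

lemma fact_mult_le_fact_add: "fact j * fact k \<le> (fact (j + k) :: real)"
proof -
  have "fact k * fact (j + k - k) * ((j + k) choose k) = (fact (j + k) :: nat)"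
    by (rule binomial_fact_lemma) simp
  hence e: "fact j * fact k * ((j + k) choose k) = (fact (j + k) :: nat)"
    by (simp add: mult.commute)
  have "(j + k) choose k > 0" by simp
  hence "fact j * fact k \<le> (fact (j + k) :: nat)"
    by (metis e le_square mult_le_mono2 nat_mult_le_cancel_disj mult.commute
          Suc_leI mult.right_neutral mult_le_mono1 order_refl)
  thus ?thesis by (metis of_nat_fact of_nat_le_iff of_nat_mult)
qed

lemma inf_sq:
  fixes a :: "nat \<Rightarrow> real" and h :: real
  assumes pos: "\<And>k. a k > 0" and le: "\<And>j k. h \<le> a j * a k"
  shows "h \<le> (INF k. a k)\<^sup>2"
proof -
  define I where "I = (INF k. a k)"
  have bdd: "bdd_below (range a)" using pos by (intro bdd_belowI[of _ 0]) (auto intro: less_imp_le)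
  have I0: "I \<ge> 0" unfolding I_def by (rule cINF_greatest) (auto intro: less_imp_le pos)
  have step: "h \<le> I * a k" for k
  proof -
    have "h / a k \<le> a j" for j using le[of j k] pos[of k] by (simp add: divide_le_eq mult.commute)
    hence "h / a k \<le> I" unfolding I_def by (intro cINF_greatest) auto
    thus ?thesis using pos[of k] by (simp add: divide_le_eq mult.commute)
  qed
  show ?thesis
  proof (cases "I = 0")
    case True thus ?thesis using step[of 0] by (simp add: I_def)
  next
    case False
    hence Ip: "I > 0" using I0 by simp
    have "h / I \<le> a k" for k using step[of k] Ip by (simp add: divide_le_eq mult.commute)
    hence "h / I \<le> I" unfolding I_def by (intro cINF_greatest) auto
    thus ?thesis using Ip by (simp add: divide_le_eq power2_eq_square I_def)
  qed
qed

theorem lemma3p13: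
  fixes M N :: "nat \<Rightarrow> real" and C :: real
  assumes "weight_seq M" and "weight_seq N"
    and "filterlim (\<lambda>k. root k (small_seq M k)) at_top sequentially"
    and "filterlim (\<lambda>k. root k (small_seq N k)) at_top sequentially"
    and "C \<ge> 1"
    and "\<forall>j k. M (k + j) \<le> C ^ (k + j) * N j * N k"
  shows "\<exists>D\<ge>1. \<forall>t>0. h_fun (small_seq M) t \<le> (h_fun (small_seq N) (D * t))\<^sup>2"
proof (intro exI[of _ C] conjI allI impI)
  show "C \<ge> 1" by fact
  fix t :: real assume t: "t > 0"
  have Mp: "\<And>k. M k > 0" and Np: "\<And>k. N k > 0"
    using assms(1,2) unfolding weight_seq_def by auto
  define a where "a k = small_seq N k * (C * t) ^ k" for k
  have apos: "a k > 0" for k unfolding a_def small_seq_def using Np[of k] t assms(5) by simp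
  have bddM: "bdd_below (range (\<lambda>k. small_seq M k * t ^ k))"
    using Mp t by (intro bdd_belowI[of _ 0]) (auto simp: small_seq_def less_imp_le)
  have "h_fun (small_seq M) t \<le> a j * a k" for j k
  proof -
    have "h_fun (small_seq M) t \<le> small_seq M (k + j) * t ^ (k + j)"
      unfolding h_fun_def by (rule cINF_lower[OF bddM]) simp
    also have "\<dots> \<le> C ^ (k + j) * N j * N k / fact (k + j) * t ^ (k + j)"
      unfolding small_seq_def using assms(6) t
      by (intro mult_right_mono divide_right_mono) auto
    also have "\<dots> \<le> C ^ (k + j) * N j * N k / (fact j * fact k) * t ^ (k + j)"
    proof -
      have "C ^ (k + j) * N j * N k \<ge> 0" using Np[of j] Np[of k] assms(5) by (simp add: less_imp_le)
      moreover have "fact j * fact k \<le> (fact (k+j) :: real)"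
        using fact_mult_le_fact_add[of j k] by (simp add: add.commute)
      moreover have "(0::real) < fact j * fact k" by simp
      ultimately show ?thesis using t
        by (intro mult_right_mono divide_left_mono) auto
    qed
    also have "\<dots> = a j * a k"
      unfolding a_def small_seq_def by (simp add: power_add power_mult_distrib field_simps)
    finally show ?thesis .
  qed
  hence "h_fun (small_seq M) t \<le> (INF k. a k)\<^sup>2" by (intro inf_sq apos)
  thus "h_fun (small_seq M) t \<le> (h_fun (small_seq N) (C * t))\<^sup>2"
    by (simp add: h_fun_def a_def)
qed

end
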